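(* The module $\mathbb W_1^{\otimes m}$ is generated by its degree-zero part $V^{\otimes m}$ as a $U(\mathfrak p)$-module.
   Context: Fix integers $\ell>1$, $n\ge m\ge1$; $\lceil i/n\rceil$ is the block index of $1\le i\le n\ell$. $E_{ij}$ are matrix units of $\mathfrak{gl}(n\ell)$; $\mathfrak p\subset\mathfrak{gl}(n\ell)\otimes\mathbb C[z]$ is the Lie subalgebra spanned by the $E_{ij}\otimes z^k$ ($k\ge0$) with $\lceil i/n\rceil-\lceil j/n\rceil+k\equiv0\pmod\ell$. Let $V=\mathbb C^{n\ell}$ and $\mathbb W_1=V\otimes\mathbb C[z]$ (graded by $z$-degree) with the natural action of $\mathfrak{gl}(n\ell)\otimes\mathbb C[z]$ ($(\xi\otimes z^k)(v\otimes z^r)=\xi v\otimes z^{k+r}$); $\mathfrak p$ acts on $\mathbb W_1^{\otimes m}$ diagonally by restriction. *)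

theory Defs
  imports Complex_Main
begin

text \<open>Block index of 1 \<le> i \<le> n*l : ceiling (i/n).\<close>
definition blk :: "nat \<Rightarrow> nat \<Rightarrow> int" where
  "blk n i = \<lceil>real i / real n\<rceil>"

text \<open>An element of gl(n l) \<otimes> C[z] is given by its coordinates X i j k
  w.r.t. the basis E_ij \<otimes> z^k (1 \<le> i,j \<le> n l, k \<ge> 0), finitely supported.\<close>
definition loop_gl :: "nat \<Rightarrow> nat \<Rightarrow> (nat \<Rightarrow> nat \<Rightarrow> nat \<Rightarrow> complex) set" where
  "loop_gl n l = {X. finite {(i,j,k). X i j k \<noteq> 0} \<and>
      (\<forall>i j k. X i j k \<noteq> 0 \<longrightarrow> i \<in> {1..n*l} \<and> j \<in> {1..n*l})}"

definition palg :: "nat \<Rightarrow> nat \<Rightarrow> (nat \<Rightarrow> nat \<Rightarrow> nat \<Rightarrow> complex) set" where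
  "palg n l = {X \<in> loop_gl n l. \<forall>i j k. X i j k \<noteq> 0 \<longrightarrow>
      (blk n i - blk n j + int k) mod int l = 0}"

text \<open>Basis of W_1^{\<otimes> m}: pairs (is, rs) of index list and degree list, both of
  length m, with e_{is!0} z^{rs!0} \<otimes> ... \<otimes> e_{is!(m-1)} z^{rs!(m-1)}.\<close>
definition valid_idx :: "nat \<Rightarrow> nat \<Rightarrow> nat \<Rightarrow> nat list \<times> nat list \<Rightarrow> bool" where
  "valid_idx n l m x \<longleftrightarrow> length (fst x) = m \<and> length (snd x) = m \<and>
      set (fst x) \<subseteq> {1..n*l}"

definition Wtens :: "nat \<Rightarrow> nat \<Rightarrow> nat \<Rightarrow> (nat list \<times> nat list \<Rightarrow> complex) set" where
  "Wtens n l m = {f. finite {x. f x \<noteq> 0} \<and> (\<forall>x. f x \<noteq> 0 \<longrightarrow> valid_idx n l m x)}"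

definition Vtens :: "nat \<Rightarrow> nat \<Rightarrow> nat \<Rightarrow> (nat list \<times> nat list \<Rightarrow> complex) set" where
  "Vtens n l m = {f \<in> Wtens n l m. \<forall>x. f x \<noteq> 0 \<longrightarrow> snd x = replicate m 0}"

text \<open>Diagonal action: (E_ij z^k)(e_a z^r) = delta_ja e_i z^(k+r), extended to each
  tensor factor and summed. Coefficient of basis vector (is, rs) in X.f.\<close>
definition act :: "nat \<Rightarrow> nat \<Rightarrow> nat \<Rightarrow> (nat \<Rightarrow> nat \<Rightarrow> nat \<Rightarrow> complex)
     \<Rightarrow> (nat list \<times> nat list \<Rightarrow> complex) \<Rightarrow> (nat list \<times> nat list \<Rightarrow> complex)" where
  "act n l m X f = (\<lambda>(is, rs). if valid_idx n l m (is, rs) then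
      (\<Sum>p<m. \<Sum>j\<in>{1..n*l}. \<Sum>k\<in>{0..rs!p}.
          X (is!p) j k * f (is[p := j], rs[p := rs!p - k]))
    else 0)"

inductive_set gen_submod :: "nat \<Rightarrow> nat \<Rightarrow> nat \<Rightarrow> (nat list \<times> nat list \<Rightarrow> complex) set"
  for n l m where
  gen: "f \<in> Vtens n l m \<Longrightarrow> f \<in> gen_submod n l m"
| zero: "(\<lambda>_. 0) \<in> gen_submod n l m"
| add: "f \<in> gen_submod n l m \<Longrightarrow> g \<in> gen_submod n l m \<Longrightarrow> (\<lambda>x. f x + g x) \<in> gen_submod n l m"
| smult: "f \<in> gen_submod n l m \<Longrightarrow> (\<lambda>x. c * f x) \<in> gen_submod n l m"
| act: "X \<in> palg n l \<Longrightarrow> f \<in> gen_submod n l m \<Longrightarrow> act n l m X f \<in> gen_submod n l m"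

end

theory Submission imports Defs begin

definition delta :: "nat list \<times> nat list \<Rightarrow> nat list \<times> nat list \<Rightarrow> complex" where
  "delta x = (\<lambda>y. if y = x then 1 else 0)"

definition E :: "nat \<Rightarrow> nat \<Rightarrow> nat \<Rightarrow> nat \<Rightarrow> nat \<Rightarrow> nat \<Rightarrow> complex" where
  "E i j r = (\<lambda>a b c. if a = i \<and> b = j \<and> c = r then 1 else 0)"

lemma blk_eq:
  assumes "n > 0" "(t-1)*n < c" "c \<le> t*n" "t \<ge> 1"
  shows "blk n c = int t"
proof -
  have "real ((t-1)*n) < real c" "real c \<le> real (t*n)" using assms by linarith+
  hence a: "(real t - 1) * real n < real c" "real c \<le> real t * real n" using assms(4)
    by (simp_all add: of_nat_diff)
  have "real t - 1 < real c / real n" using a(1) assms(1) by (simp add: field_simps)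
  moreover have "real c / real n \<le> real t" using a(2) assms(1) by (simp add: field_simps)
  ultimately show ?thesis unfolding blk_def by (simp add: ceiling_eq_iff)
qed

lemma exists_j:
  assumes "n > 0" "finite A" "card A < n" "1 \<le> t" "t \<le> l"
  shows "\<exists>j. j \<in> {1..n*l} \<and> j \<notin> A \<and> blk n j = int t"
proof -
  obtain s where s: "t = Suc s" using assms(4) by (cases t) auto
  have I: "{(t-1)*n+1..t*n} = {s*n+1..s*n+n}" using s by simp
  have "card {s*n+1..s*n+n} = n" by simp
  hence cI: "card {(t-1)*n+1..t*n} = n" by (simp only: I)
  have "\<not> {(t-1)*n+1..t*n} \<subseteq> A"
  proof
    assume "{(t-1)*n+1..t*n} \<subseteq> A"
    from card_mono[OF assms(2) this] cI assms(3) show False by simp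
  qed
  then obtain j where j: "j \<in> {(t-1)*n+1..t*n}" "j \<notin> A" by blast
  have "t*n \<le> l*n" using assms(5) by simp
  hence "t*n \<le> n*l" by (simp add: mult.commute)
  moreover have "j \<le> t*n" "1 \<le> j" using j(1) by auto
  ultimately have "j \<in> {1..n*l}" by (meson atLeastAtMost_iff le_trans)
  moreover have "blk n j = int t" using j assms by (intro blk_eq) auto
  ultimately show ?thesis using j by blast
qed

lemma E_palg:
  assumes "i \<in> {1..n*l}" "j \<in> {1..n*l}" "(blk n i - blk n j + int r) mod int l = 0"
  shows "E i j r \<in> palg n l"
proof -
  have "{(a,b,c). E i j r a b c \<noteq> 0} = {(i,j,r)}" by (auto simp: E_def split: if_splits)
  thus ?thesis using assms unfolding palg_def loop_gl_def E_def by (auto split: if_splits)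
qed

lemma sum_if_const: "(\<Sum>k\<in>S. if P then f k else 0) = (if P then (\<Sum>k\<in>S. f k) else (0::'b::comm_monoid_add))"
  by simp

lemma E_mult: "E a b c x y z * d = (if y = b then (if z = c then (if x = a then d else 0) else 0) else 0)"
  by (simp add: E_def)

lemma act_E_delta:
  assumes v: "valid_idx n l m (is, rs)" and p: "p < m" and j: "j \<in> {1..n*l}"
    and fr: "\<forall>q<m. q \<noteq> p \<longrightarrow> is!q \<noteq> j"
  shows "act n l m (E (is!p) j (rs!p)) (delta (is[p:=j], rs[p:=0])) = delta (is, rs)"
proof (rule ext, clarify)
  fix is0 rs0
  have len: "length is = m" "length rs = m" using v by (auto simp: valid_idx_def)
  show "act n l m (E (is!p) j (rs!p)) (delta (is[p:=j], rs[p:=0])) (is0, rs0) = delta (is, rs) (is0, rs0)"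
  proof (cases "valid_idx n l m (is0, rs0)")
    case False
    hence "(is0,rs0) \<noteq> (is,rs)" using v by auto
    thus ?thesis using False by (simp add: act_def delta_def)
  next
    case True
    have len0: "length is0 = m" "length rs0 = m" using True by (auto simp: valid_idx_def)
    define C where "C q = (is0!q = is!p \<and> rs!p \<le> rs0!q \<and> is0[q:=j] = is[p:=j] \<and> rs0[q:=rs0!q - rs!p] = rs[p:=0])" for q
    have inner: "(\<Sum>j'\<in>{1..n*l}. \<Sum>k\<in>{0..rs0!q}. E (is!p) j (rs!p) (is0!q) j' k * delta (is[p:=j], rs[p:=0]) (is0[q := j'], rs0[q := rs0!q - k]))
         = (if C q then 1 else 0)" for q
    proof -
      have "(\<Sum>j'\<in>{1..n*l}. \<Sum>k\<in>{0..rs0!q}. E (is!p) j (rs!p) (is0!q) j' k * delta (is[p:=j], rs[p:=0]) (is0[q := j'], rs0[q := rs0!q - k]))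
        = (\<Sum>j'\<in>{1..n*l}. if j' = j then (\<Sum>k\<in>{0..rs0!q}. if k = rs!p then (if is0!q = is!p then delta (is[p:=j], rs[p:=0]) (is0[q := j'], rs0[q := rs0!q - k]) else 0) else 0) else 0)"
        by (simp add: E_mult sum_if_const)
      also have "\<dots> = (\<Sum>k\<in>{0..rs0!q}. if k = rs!p then (if is0!q = is!p then delta (is[p:=j], rs[p:=0]) (is0[q := j], rs0[q := rs0!q - k]) else 0) else 0)"
        using j by (simp only: sum.delta finite_atLeastAtMost if_True)
      also have "\<dots> = (if rs!p \<le> rs0!q then (if is0!q = is!p then delta (is[p:=j], rs[p:=0]) (is0[q := j], rs0[q := rs0!q - rs!p]) else 0) else 0)"
        by (simp only: sum.delta finite_atLeastAtMost atLeastAtMost_iff zero_le simp_thms)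
      also have "\<dots> = (if C q then 1 else 0)" unfolding C_def delta_def by auto
      finally show ?thesis .
    qed
    have "act n l m (E (is!p) j (rs!p)) (delta (is[p:=j], rs[p:=0])) (is0, rs0) =
      (\<Sum>q<m. \<Sum>j'\<in>{1..n*l}. \<Sum>k\<in>{0..rs0!q}. E (is!p) j (rs!p) (is0!q) j' k * delta (is[p:=j], rs[p:=0]) (is0[q := j'], rs0[q := rs0!q - k]))"
      unfolding act_def prod.case by (rule if_P[OF True])
    also have "\<dots> = (\<Sum>q<m. if C q then 1 else 0)"
      by (rule sum.cong[OF refl], rule inner)
    also have "\<dots> = (if C p then 1 else 0)"
    proof -
      have nq: "\<not> C q" if "q < m" "q \<noteq> p" for q
      proof
        assume "C q"
        hence "is0[q:=j] ! q = is[p:=j] ! q" unfolding C_def by simp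
        hence "j = is!q" using that len len0 by simp
        thus False using fr that by blast
      qed
      have "(\<Sum>q<m. if C q then 1 else 0) = (if C p then 1 else 0) + (\<Sum>q\<in>{..<m}-{p}. if C q then (1::complex) else 0)"
        using p by (subst sum.remove[of _ p]) auto
      also have "(\<Sum>q\<in>{..<m}-{p}. if C q then (1::complex) else 0) = 0"
        using nq by (intro sum.neutral) auto
      finally show ?thesis by simp
    qed
    also have "C p \<longleftrightarrow> (is0, rs0) = (is, rs)"
    proof
      assume c: "C p"
      have "is0 = is"
      proof (rule nth_equalityI)
        show "length is0 = length is" using len len0 by simp
        fix q assume "q < length is0"
        thus "is0!q = is!q" using c len len0 unfolding C_def
          by (metis nth_list_update_neq)
      qed
      moreover have "rs0 = rs"
      proof (rule nth_equalityI)
        show "length rs0 = length rs" using len len0 by simp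
        fix q assume q: "q < length rs0"
        show "rs0!q = rs!q"
        proof (cases "q = p")
          case True
          have "rs0[p:=rs0!p - rs!p] ! p = rs[p:=0] ! p" using c C_def by simp
          hence "rs0!p - rs!p = 0" using p len len0 by simp
          thus ?thesis using c True unfolding C_def by simp
        next
          case False
          have "rs0[p:=rs0!p - rs!p] ! q = rs[p:=0] ! q" using c C_def by simp
          thus ?thesis using False by simp
        qed
      qed
      ultimately show "(is0, rs0) = (is, rs)" by simp
    next
      assume "(is0, rs0) = (is, rs)"
      thus "C p" unfolding C_def by simp
    qed
    finally show ?thesis by (simp add: delta_def)
  qed
qed

lemma act_Wtens:
  assumes X: "X \<in> palg n l" and f: "f \<in> Wtens n l m"
  shows "act n l m X f \<in> Wtens n l m"
proof -
  define SX where "SX = {(i,j,k). X i j k \<noteq> 0}"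
  define SF where "SF = {x. f x \<noteq> 0}"
  have fSX: "finite SX" using X unfolding SX_def palg_def loop_gl_def by auto
  have fSF: "finite SF" using f unfolding SF_def Wtens_def by auto
  define g where "g = (\<lambda>((xs'::nat list, rs'::nat list), p::nat, (i::nat, j::nat, k::nat)). (xs'[p:=i], rs'[p:=rs'!p+k]))"
  have sub: "{x. act n l m X f x \<noteq> 0} \<subseteq> g ` (SF \<times> {..<m} \<times> SX)"
  proof clarify
    fix xs rs assume nz: "act n l m X f (xs, rs) \<noteq> 0"
    hence v: "valid_idx n l m (xs, rs)" by (simp add: act_def split: if_splits)
    hence len: "length xs = m" "length rs = m" by (auto simp: valid_idx_def)
    have "act n l m X f (xs, rs) = (\<Sum>p<m. \<Sum>j\<in>{1..n*l}. \<Sum>k\<in>{0..rs!p}. X (xs!p) j k * f (xs[p := j], rs[p := rs!p - k]))"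
      unfolding act_def prod.case by (rule if_P[OF v])
    with nz have "(\<Sum>p<m. \<Sum>j\<in>{1..n*l}. \<Sum>k\<in>{0..rs!p}. X (xs!p) j k * f (xs[p := j], rs[p := rs!p - k])) \<noteq> 0"
      by simp
    then obtain p where p: "p \<in> {..<m}" and s1:
      "(\<Sum>j\<in>{1..n*l}. \<Sum>k\<in>{0..rs!p}. X (xs!p) j k * f (xs[p := j], rs[p := rs!p - k])) \<noteq> 0"
      by (rule sum.not_neutral_contains_not_neutral)
    from s1 obtain j where "j \<in> {1..n*l}" and s2: "(\<Sum>k\<in>{0..rs!p}. X (xs!p) j k * f (xs[p := j], rs[p := rs!p - k])) \<noteq> 0"
      by (rule sum.not_neutral_contains_not_neutral)
    from s2 obtain k where k0: "k \<in> {0..rs!p}" "X (xs!p) j k * f (xs[p := j], rs[p := rs!p - k]) \<noteq> 0"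
      by (rule sum.not_neutral_contains_not_neutral)
    hence k: "k \<le> rs!p" "X (xs!p) j k \<noteq> 0" "f (xs[p := j], rs[p := rs!p - k]) \<noteq> 0" by auto
    have mem: "((xs[p := j], rs[p := rs!p - k]), p, (xs!p, j, k)) \<in> SF \<times> {..<m} \<times> SX"
      using k p unfolding SF_def SX_def by simp
    have "g ((xs[p := j], rs[p := rs!p - k]), p, (xs!p, j, k)) = (xs, rs)"
      using k p len by (simp add: g_def)
    thus "(xs, rs) \<in> g ` (SF \<times> {..<m} \<times> SX)" using mem by (metis image_eqI)
  qed
  have "finite {x. act n l m X f x \<noteq> 0}"
    by (rule finite_subset[OF sub]) (intro finite_imageI finite_cartesian_product fSF fSX finite_lessThan)
  moreover have "\<forall>x. act n l m X f x \<noteq> 0 \<longrightarrow> valid_idx n l m x"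
    by (auto simp: act_def split: if_splits)
  ultimately show ?thesis unfolding Wtens_def by blast
qed

lemma gen_sub_W: "f \<in> gen_submod n l m \<Longrightarrow> f \<in> Wtens n l m"
proof (induction rule: gen_submod.induct)
  case (gen f) thus ?case by (simp add: Vtens_def)
next
  case zero thus ?case by (simp add: Wtens_def)
next
  case (add f g)
  have "{x. f x + g x \<noteq> 0} \<subseteq> {x. f x \<noteq> 0} \<union> {x. g x \<noteq> 0}" by auto
  with add show ?case unfolding Wtens_def by (auto intro: finite_subset)
next
  case (smult f c)
  have "{x. c * f x \<noteq> 0} \<subseteq> {x. f x \<noteq> 0}" by auto
  with smult show ?case unfolding Wtens_def by (auto intro: finite_subset)
next
  case (act X f) thus ?case using act_Wtens by blast
qed

lemma delta_gen:
  assumes l: "l > 1" and nm: "n \<ge> m" and m: "m \<ge> 1"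
  shows "valid_idx n l m (xs, rs) \<Longrightarrow> delta (xs, rs) \<in> gen_submod n l m"
proof (induction "sum_list rs" arbitrary: xs rs rule: less_induct)
  case less
  have v: "valid_idx n l m (xs, rs)" by fact
  have len: "length xs = m" "length rs = m" and xsr: "set xs \<subseteq> {1..n*l}"
    using v by (auto simp: valid_idx_def)
  show ?case
  proof (cases "\<exists>p<m. rs!p \<noteq> 0")
    case False
    hence "rs = replicate m 0" using len by (intro nth_equalityI) auto
    moreover have "{x. delta (xs, rs) x \<noteq> 0} = {(xs, rs)}" by (auto simp: delta_def)
    ultimately have "delta (xs, rs) \<in> Vtens n l m" using v
      unfolding Vtens_def Wtens_def by (auto simp: delta_def)
    thus ?thesis by (rule gen_submod.gen)
  next
    case True
    then obtain p where p: "p < m" and rp: "rs!p \<noteq> 0" by blast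
    define i where "i = xs!p"
    define r where "r = rs!p"
    have i: "i \<in> {1..n*l}" using xsr p len unfolding i_def by (auto simp: set_conv_nth)
    define a where "a = blk n i + int r - 1"
    define T where "T = a mod int l + 1"
    have lp: "int l > 0" using l by simp
    have "0 \<le> a mod int l" "a mod int l < int l" using pos_mod_sign[OF lp] pos_mod_bound[OF lp] by auto
    hence T1: "1 \<le> T" "T \<le> int l" unfolding T_def by auto
    define t where "t = nat T"
    have t: "1 \<le> t" "t \<le> l" using T1 unfolding t_def by auto
    define A where "A = (\<lambda>q. xs!q) ` ({..<m} - {p})"
    have "card A \<le> card ({..<m} - {p})" unfolding A_def by (rule card_image_le) auto
    also have "\<dots> = m - 1" using p by simp
    finally have cA: "card A < n" using nm m by linarith
    have n0: "n > 0" using nm m by simp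
    have fA: "finite A" unfolding A_def by simp
    obtain j where j: "j \<in> {1..n*l}" "j \<notin> A" "blk n j = int t"
      using exists_j[OF n0 fA cA t] by blast
    have fr: "\<forall>q<m. q \<noteq> p \<longrightarrow> xs!q \<noteq> j" using j(2) unfolding A_def by auto
    have v2: "valid_idx n l m (xs[p:=j], rs[p:=0])"
      using v j(1) set_update_subset_insert[of xs p j] unfolding valid_idx_def by auto
    have "sum_list (rs[p:=0]) = sum_list rs - rs!p" using p len by (simp add: sum_list_update)
    moreover have "rs!p \<le> sum_list rs" using p len by (simp add: elem_le_sum_list)
    ultimately have "sum_list (rs[p:=0]) < sum_list rs" using rp by linarith
    hence IH: "delta (xs[p:=j], rs[p:=0]) \<in> gen_submod n l m" using less(1) v2 by blast
    have "blk n i - blk n j + int r = a - a mod int l"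
      using j(3) T1 unfolding t_def T_def a_def by simp
    hence cong: "(blk n i - blk n j + int r) mod int l = 0"
      by (simp add: minus_mod_eq_mult_div)
    have EP: "E i j r \<in> palg n l" using E_palg[OF i j(1) cong] .
    have "act n l m (E i j r) (delta (xs[p:=j], rs[p:=0])) = delta (xs, rs)"
      unfolding i_def r_def by (rule act_E_delta[OF v p j(1) fr])
    moreover have "act n l m (E i j r) (delta (xs[p:=j], rs[p:=0])) \<in> gen_submod n l m"
      by (rule gen_submod.act[OF EP IH])
    ultimately show ?thesis by simp
  qed
qed

lemma comb_gen:
  assumes l: "l > 1" and nm: "n \<ge> m" and m: "m \<ge> 1"
  shows "finite S \<Longrightarrow> (\<forall>x\<in>S. valid_idx n l m x) \<Longrightarrow> (\<lambda>y. \<Sum>x\<in>S. c x * delta x y) \<in> gen_submod n l m"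
proof (induction S rule: finite_induct)
  case empty
  thus ?case using gen_submod.zero by simp
next
  case (insert x F)
  obtain xs rs where x: "x = (xs, rs)" by force
  have d: "delta x \<in> gen_submod n l m" using delta_gen[OF l nm m] insert x by auto
  have "(\<lambda>y. (\<lambda>y. c x * delta x y) y + (\<lambda>y. \<Sum>x\<in>F. c x * delta x y) y) \<in> gen_submod n l m"
    by (rule gen_submod.add[OF gen_submod.smult[OF d]]) (use insert in auto)
  thus ?case using insert by simp
qed

theorem proposition2p3:
  fixes n l m :: nat
  assumes "l > 1" and "n \<ge> m" and "m \<ge> 1"
  shows "gen_submod n l m = Wtens n l m"
proof
  show "gen_submod n l m \<subseteq> Wtens n l m" using gen_sub_W by blast
next
  show "Wtens n l m \<subseteq> gen_submod n l m"
  proof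
    fix f assume f: "f \<in> Wtens n l m"
    define S where "S = {x. f x \<noteq> 0}"
    have S: "finite S" "\<forall>x\<in>S. valid_idx n l m x" using f unfolding S_def Wtens_def by auto
    have "f = (\<lambda>y. \<Sum>x\<in>S. f x * delta x y)"
    proof
      fix y
      have "(\<Sum>x\<in>S. f x * delta x y) = (\<Sum>x\<in>S. if x = y then f y else 0)"
        by (rule sum.cong) (auto simp: delta_def)
      also have "\<dots> = f y" using S(1) by (simp add: S_def)
      finally show "f y = (\<Sum>x\<in>S. f x * delta x y)" by simp
    qed
    thus "f \<in> gen_submod n l m" using comb_gen[OF assms S, where c = f] by simp
  qed
qed

end
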